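(* Let $I\subseteq[0,\infty)$ be an interval, let $f:I\to\mathbb{R}$ be twice differentiable on $I^\circ$, and let $a,b\in I^\circ$ with $a<b$ such that $f''\in L^1[a,b]$. Let $q\ge1$ and assume $|f''|^q$ is quasi-convex on $[a,b]$. Let $d: a=x_0<x_1<\dots<x_n=b$ be a partition of $[a,b]$, let $T(f,d)=\sum_{i=0}^{n-1}\frac{f(x_i)+f(x_{i+1})}{2}(x_{i+1}-x_i)$ and $E(f,d)=\int_a^b f(x)\,dx-T(f,d)$. Then $$|E(f,d)|\le \frac14\left(\frac{2}{(q+1)(q+2)}\right)^{\frac1q}\sum_{i=0}^{n-1}(x_{i+1}-x_i)^3\left(\max\{|f''(x_i)|^q,|f''(x_{i+1})|^q\}\right)^{\frac1q}.$$
   Context: A function $g:[a,b]\to\mathbb{R}$ is quasi-convex on $[a,b]$ if $g(\lambda x+(1-\lambda)y)\le\max\{g(x),g(y)\}$ for all $x,y\in[a,b]$ and $\lambda\in[0,1]$. *)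

theory Defs
  imports "HOL-Analysis.Analysis"
begin

definition quasi_convex_on :: "real set \<Rightarrow> (real \<Rightarrow> real) \<Rightarrow> bool" where
  "quasi_convex_on S g \<longleftrightarrow>
     (\<forall>x\<in>S. \<forall>y\<in>S. \<forall>l::real. 0 \<le> l \<and> l \<le> 1 \<longrightarrow>
        g (l * x + (1 - l) * y) \<le> max (g x) (g y))"

definition trap_sum :: "(real \<Rightarrow> real) \<Rightarrow> (nat \<Rightarrow> real) \<Rightarrow> nat \<Rightarrow> real" where
  "trap_sum f x n = (\<Sum>i<n. (f (x i) + f (x (Suc i))) / 2 * (x (Suc i) - x i))"

definition trap_err :: "(real \<Rightarrow> real) \<Rightarrow> (nat \<Rightarrow> real) \<Rightarrow> nat \<Rightarrow> real" where
  "trap_err f x n = integral {x 0..x n} f - trap_sum f x n"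

end

theory Submission imports Defs begin

lemma trap_one_side:
  fixes f f' f'' :: "real \<Rightarrow> real" and c d K :: real
  assumes cd: "c \<le> d"
    and d1: "\<And>t. t \<in> {c..d} \<Longrightarrow> (f has_real_derivative f' t) (at t)"
    and d2: "\<And>t. t \<in> {c..d} \<Longrightarrow> (f' has_real_derivative f'' t) (at t)"
    and K: "\<And>t. t \<in> {c..d} \<Longrightarrow> f'' t \<le> K"
  shows "0 \<le> integral {c..d} f - (f c + f d) / 2 * (d - c) + K * (d - c) ^ 3 / 12"
proof -
  define h where "h t = f t - f c - f' t * (t - c) + K * (t - c)^2 / 2" for t
  have contf: "continuous_on {c..d} f"
    using d1 by (meson DERIV_isCont continuous_at_imp_continuous_on)
  have contf': "continuous_on {c..d} f'"
    using d2 by (meson DERIV_isCont continuous_at_imp_continuous_on)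
  have hder: "(h has_real_derivative (K - f'' t) * (t - c)) (at t)" if "t \<in> {c..d}" for t
  proof -
    have p: "((\<lambda>t. K * (t - c)^2 / 2) has_real_derivative K * (t - c)) (at t)"
      by (auto intro!: derivative_eq_intros simp: field_simps)
    have q: "((\<lambda>t. t - c) has_real_derivative 1) (at t)"
      by (auto intro!: derivative_eq_intros)
    show ?thesis
      unfolding h_def
      apply (rule DERIV_cong)
       apply (rule p q d1 d2 that DERIV_add DERIV_diff DERIV_mult DERIV_const)+
      by (simp add: algebra_simps)
  qed
  have hnn: "0 \<le> h t" if t: "t \<in> {c..d}" for t
  proof -
    have "h c \<le> h t"
    proof (rule DERIV_nonneg_imp_increasing_open[of c t])
      show "c \<le> t" using t by auto
      fix y assume "c < y" "y < t"
      then have "y \<in> {c..d}" using t by auto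
      then show "\<exists>z. (h has_real_derivative z) (at y) \<and> 0 \<le> z"
        using hder K \<open>c < y\<close> by (intro exI[of _ "(K - f'' y) * (y - c)"]) auto
    next
      show "continuous_on {c..t} h"
        using hder t by (intro continuous_at_imp_continuous_on ballI DERIV_isCont) (auto intro: hder)
    qed
    then show ?thesis by (simp add: h_def)
  qed
  define g where "g t = integral {c..t} f - (f c + f t) / 2 * (t - c) + K * (t - c) ^ 3 / 12" for t
  have gder: "(g has_real_derivative h t / 2) (at t within {c..d})" if "t \<in> {c..d}" for t
  proof -
    have p: "((\<lambda>t. K * (t - c)^3 / 12) has_real_derivative K * (t - c)^2 / 4) (at t within {c..d})"
      by (auto intro!: derivative_eq_intros simp: field_simps)
    have q: "((\<lambda>t. t - c) has_real_derivative 1) (at t within {c..d})"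
      by (auto intro!: derivative_eq_intros)
    have r: "((\<lambda>t. (f c + f t) / 2) has_real_derivative f' t / 2) (at t within {c..d})"
      by (auto intro!: derivative_eq_intros DERIV_subset[OF d1[OF that]])
    show ?thesis
      unfolding g_def
      apply (rule DERIV_cong)
       apply (rule p q r integral_has_real_derivative contf that DERIV_add DERIV_diff DERIV_mult)+
      by (simp add: h_def field_simps power2_eq_square)
  qed
  have "g c \<le> g d"
  proof (rule DERIV_nonneg_imp_increasing_open[OF cd])
    fix y assume y: "c < y" "y < d"
    then have "y \<in> interior {c..d}" by auto
    then show "\<exists>z. (g has_real_derivative z) (at y) \<and> 0 \<le> z"
      using gder[of y] hnn[of y] y at_within_interior[of y "{c..d}"]
      by (intro exI[of _ "h y / 2"]) auto
  next
    show "continuous_on {c..d} g"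
      using gder by (meson DERIV_continuous continuous_on_eq_continuous_within)
  qed
  then show ?thesis by (simp add: g_def)
qed

lemma trap_two_side:
  fixes f f' f'' :: "real \<Rightarrow> real" and c d K :: real
  assumes cd: "c \<le> d"
    and d1: "\<And>t. t \<in> {c..d} \<Longrightarrow> (f has_real_derivative f' t) (at t)"
    and d2: "\<And>t. t \<in> {c..d} \<Longrightarrow> (f' has_real_derivative f'' t) (at t)"
    and K: "\<And>t. t \<in> {c..d} \<Longrightarrow> \<bar>f'' t\<bar> \<le> K"
  shows "\<bar>integral {c..d} f - (f c + f d) / 2 * (d - c)\<bar> \<le> K * (d - c) ^ 3 / 12"
proof -
  have A: "0 \<le> integral {c..d} f - (f c + f d) / 2 * (d - c) + K * (d - c) ^ 3 / 12"
    using K by (intro trap_one_side[OF cd d1 d2]) (auto simp: abs_le_iff)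
  have B: "0 \<le> integral {c..d} (\<lambda>t. - f t) - (- f c + - f d) / 2 * (d - c) + K * (d - c) ^ 3 / 12"
    using K by (intro trap_one_side[OF cd, of _ "\<lambda>t. - f' t" "\<lambda>t. - f'' t"])
       (auto simp: abs_le_iff intro!: DERIV_minus[OF d1] DERIV_minus[OF d2])
  have "integral {c..d} (\<lambda>t. - f t) = - integral {c..d} f" by (rule integral_neg)
  moreover have "(- f c + - f d) / 2 * (d - c) = - ((f c + f d) / 2 * (d - c))" by (simp add: field_simps)
  ultimately show ?thesis using A B by (simp only: abs_le_iff) linarith
qed

lemma three_powr_bound:
  fixes q :: real assumes q: "q \<ge> 1"
  shows "1/3 \<le> (2 / ((q + 1) * (q + 2))) powr (1 / q)"
proof -
  define s where "s = q - 1"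
  have s: "s \<ge> 0" using q by (simp add: s_def)
  define L where "L = ln (3::real)"
  have L: "L > 1" using ln3_gt_1 by (simp add: L_def)
  have "3 powr q = exp (q * L)" by (simp add: powr_def L_def)
  also have "\<dots> = 3 * exp (s * L)"
    by (simp add: s_def L_def algebra_simps exp_add[symmetric] exp_diff)
  finally have e: "3 powr q = 3 * exp (s * L)" .
  have "1 + s * L + (s * L)^2 / 2 \<le> exp (s * L)"
    using s L by (intro exp_lower_Taylor_quadratic) simp
  moreover have "1 + s + s^2/2 \<le> 1 + s * L + (s * L)^2 / 2"
  proof -
    have "s \<le> s * L" using s L by (simp add: mult_le_cancel_left1)
    moreover have "s^2 \<le> (s*L)^2" using s L \<open>s \<le> s * L\<close> by (intro power_mono) auto
    ultimately show ?thesis by simp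
  qed
  ultimately have E: "1 + s + s^2/2 \<le> exp (s * L)" by linarith
  have qs: "q = s + 1" by (simp add: s_def)
  have "(q + 1) * (q + 2) / 2 = 3 + 5/2 * s + s^2/2" unfolding qs by (simp add: power2_eq_square field_simps)
  also have "\<dots> \<le> 3 * (1 + s + s^2/2)" using s by (simp add: power2_eq_square field_simps)
  also have "\<dots> \<le> 3 powr q" unfolding e using E by simp
  finally have "(q + 1) * (q + 2) / 2 \<le> 3 powr q" .
  moreover have "0 < (q + 1) * (q + 2)" using q by simp
  moreover have "0 < (3::real) powr q" by simp
  ultimately have le0: "1 / 3 powr q \<le> 2 / ((q + 1) * (q + 2))"
    by (simp add: divide_simps)
  have "(1/3::real) powr q = 1 / 3 powr q" by (simp add: powr_divide)
  with le0 have le: "(1/3) powr q \<le> 2 / ((q + 1) * (q + 2))" by simp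
  have "1/3 = ((1/3) powr q) powr (1/q)"
    using q by (simp add: powr_powr)
  also have "\<dots> \<le> (2 / ((q + 1) * (q + 2))) powr (1 / q)"
    using le q by (intro powr_mono2) auto
  finally show ?thesis .
qed

theorem proposition3:
  fixes I :: "real set" and f f' f'' :: "real \<Rightarrow> real" and a b q :: real
    and x :: "nat \<Rightarrow> real" and n :: nat
  assumes I_int: "is_interval I" and I_nonneg: "I \<subseteq> {0..}"
    and f': "\<And>t. t \<in> interior I \<Longrightarrow> (f has_real_derivative f' t) (at t)"
    and f'': "\<And>t. t \<in> interior I \<Longrightarrow> (f' has_real_derivative f'' t) (at t)"
    and a: "a \<in> interior I" and b: "b \<in> interior I" and ab: "a < b"
    and L1: "f'' absolutely_integrable_on {a..b}"
    and q: "q \<ge> 1"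
    and qc: "quasi_convex_on {a..b} (\<lambda>t. \<bar>f'' t\<bar> powr q)"
    and n: "n \<ge> 1" and x0: "x 0 = a" and xn: "x n = b"
    and xmono: "\<And>i. i < n \<Longrightarrow> x i < x (Suc i)"
  shows "\<bar>trap_err f x n\<bar> \<le> 1/4 * (2 / ((q + 1) * (q + 2))) powr (1 / q) *
           (\<Sum>i<n. (x (Suc i) - x i) ^ 3 *
              (max (\<bar>f'' (x i)\<bar> powr q) (\<bar>f'' (x (Suc i))\<bar> powr q)) powr (1 / q))"
proof -
  have xle: "x i \<le> x j" if "i \<le> j" "j \<le> n" for i j
    using that
  proof (induction j)
    case 0 then show ?case by simp
  next
    case (Suc j)
    show ?case
    proof (cases "i = Suc j")
      case True then show ?thesis by simp
    next
      case False
      then have "x i \<le> x j" using Suc by auto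
      also have "x j < x (Suc j)" using xmono Suc by auto
      finally show ?thesis by simp
    qed
  qed
  have xab: "x i \<in> {a..b}" if "i \<le> n" for i
    using xle[of 0 i] xle[of i n] that x0 xn by auto
  have conv: "convex (interior I)"
    using I_int by (simp add: is_interval_convex_1)
  have abI: "{a..b} \<subseteq> interior I"
  proof
    fix t assume "t \<in> {a..b}"
    then show "t \<in> interior I"
    proof -
      have "is_interval (interior I)" using conv is_interval_convex_1 by blast
      then show ?thesis using a b \<open>t \<in> {a..b}\<close> by (intro mem_is_interval_1_I[where S="interior I" and a=a and b=t and c=b]) auto
    qed
  qed
  have contf: "continuous_on {a..b} f"
    using abI f' by (meson DERIV_isCont continuous_at_imp_continuous_on subsetD)
  have intf: "f integrable_on {a..b}" using contf integrable_continuous_real by blast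
  have split: "integral {x 0..x m} f = (\<Sum>i<m. integral {x i..x (Suc i)} f)" if "m \<le> n" for m
    using that
  proof (induction m)
    case 0 then show ?case by simp
  next
    case (Suc m)
    have "f integrable_on {x 0..x (Suc m)}"
      using xab[of 0] xab[of "Suc m"] Suc.prems
      by (intro integrable_subinterval_real[OF intf]) auto
    then have "integral {x 0..x m} f + integral {x m..x (Suc m)} f = integral {x 0..x (Suc m)} f"
      using xle[of 0 m] xle[of m "Suc m"] Suc.prems by (intro Henstock_Kurzweil_Integration.integral_combine) auto
    then show ?case using Suc by simp
  qed
  define M where "M i = max (\<bar>f'' (x i)\<bar> powr q) (\<bar>f'' (x (Suc i))\<bar> powr q)" for i
  have bnd: "\<bar>f'' t\<bar> \<le> M i powr (1/q)" if i: "i < n" and t: "t \<in> {x i..x (Suc i)}" for i t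
  proof -
    define l where "l = (x (Suc i) - t) / (x (Suc i) - x i)"
    have hpos: "x (Suc i) - x i > 0" using xmono i by simp
    have l01: "0 \<le> l" "l \<le> 1" using t hpos by (auto simp: l_def divide_simps)
    have e1: "l * (x (Suc i) - x i) = x (Suc i) - t"
      using hpos by (simp add: l_def)
    have e2: "l * x i + (1 - l) * x (Suc i) = x (Suc i) - l * (x (Suc i) - x i)"
      by (simp add: algebra_simps)
    have tl: "t = l * x i + (1 - l) * x (Suc i)" using e1 e2 by linarith
    have "\<bar>f'' t\<bar> powr q \<le> M i"
      using qc xab[of i] xab[of "Suc i"] i l01 unfolding quasi_convex_on_def M_def tl
      by auto
    then have "(\<bar>f'' t\<bar> powr q) powr (1/q) \<le> M i powr (1/q)"
      using q by (intro powr_mono2) auto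
    moreover have "(\<bar>f'' t\<bar> powr q) powr (1/q) = \<bar>f'' t\<bar>"
      using q by (simp add: powr_powr)
    ultimately show ?thesis by simp
  qed
  have each: "\<bar>integral {x i..x (Suc i)} f - (f (x i) + f (x (Suc i))) / 2 * (x (Suc i) - x i)\<bar>
      \<le> M i powr (1/q) * (x (Suc i) - x i) ^ 3 / 12" if i: "i < n" for i
  proof (rule trap_two_side)
    show "x i \<le> x (Suc i)" using xmono i by (simp add: less_imp_le)
    fix t assume t: "t \<in> {x i..x (Suc i)}"
    then have "t \<in> {a..b}" using xab[of i] xab[of "Suc i"] i by auto
    then have "t \<in> interior I" using abI by auto
    then show "(f has_real_derivative f' t) (at t)" "(f' has_real_derivative f'' t) (at t)"
      using f' f'' by auto
    show "\<bar>f'' t\<bar> \<le> M i powr (1/q)" using bnd i t by auto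
  qed
  define C where "C = (2 / ((q + 1) * (q + 2))) powr (1 / q)"
  have C: "1/3 \<le> C" unfolding C_def using three_powr_bound q by auto
  have "trap_err f x n = (\<Sum>i<n. integral {x i..x (Suc i)} f - (f (x i) + f (x (Suc i))) / 2 * (x (Suc i) - x i))"
    unfolding trap_err_def trap_sum_def using split[of n] by (simp add: sum_subtractf)
  then have "\<bar>trap_err f x n\<bar> \<le> (\<Sum>i<n. \<bar>integral {x i..x (Suc i)} f - (f (x i) + f (x (Suc i))) / 2 * (x (Suc i) - x i)\<bar>)"
    by (simp add: sum_abs)
  also have "\<dots> \<le> (\<Sum>i<n. M i powr (1/q) * (x (Suc i) - x i) ^ 3 / 12)"
    using each by (intro sum_mono) auto
  also have "\<dots> \<le> (\<Sum>i<n. 1/4 * C * ((x (Suc i) - x i) ^ 3 * M i powr (1/q)))"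
  proof (intro sum_mono)
    fix i assume "i \<in> {..<n}"
    then have "0 \<le> (x (Suc i) - x i) ^ 3 * M i powr (1/q)"
      using xmono by (simp add: less_imp_le)
    then show "M i powr (1/q) * (x (Suc i) - x i) ^ 3 / 12 \<le> 1/4 * C * ((x (Suc i) - x i) ^ 3 * M i powr (1/q))"
      using C mult_right_mono[OF C, of "(x (Suc i) - x i) ^ 3 * M i powr (1/q)"]
      by (simp add: field_simps)
  qed
  also have "\<dots> = 1/4 * C * (\<Sum>i<n. (x (Suc i) - x i) ^ 3 * M i powr (1/q))"
    by (simp add: sum_distrib_left)
  finally show ?thesis unfolding C_def M_def .
qed

end
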